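(* Let $(A,\succ,\prec,\omega)$ be a quadratic anti-pre-Novikov algebra and $s\in A\otimes A$ such that $s+\tau(s)$ is invariant. Define $P:A\to A$ by $P(x)=T_s\omega^\sharp(x)$. Then $s$ is a solution of the anti-pre-Novikov Yang–Baxter equation in $(A,\succ,\prec)$ if and only if for all $x,y\in A$: $P(x)\succ P(y)=P\big(P(x)\succ y+x\succ P(y)-x\succ T_{s+\tau(s)}\omega^\sharp(y)\big)$ and $P(x)\prec P(y)=P\big(P(x)\prec y+x\prec P(y)-x\prec T_{s+\tau(s)}\omega^\sharp(y)\big)$.
   Context: $A$ is finite-dimensional over a field $k$. An anti-pre-Novikov algebra is $(A,\succ,\prec)$ such that with $x\circ y=x\succ y+x\prec y$: $(x\circ y-y\circ x)\succ z=y\succ(x\succ z)-x\succ(y\succ z)$; $x\prec(y\circ z)=(y\succ x)\prec z-(x\prec y)\prec z-y\succ(x\prec z)$; $(x\circ y)\succ z=-(x\succ z)\prec y$; $(x\prec y)\prec z=(x\prec z)\prec y$; $(x\circ y-y\circ x)\prec z=x\succ(y\circ z)-y\succ(x\circ z)$. It is quadratic with respect to $\omega$ if $\omega$ is non-degenerate symmetric bilinear with $\omega(x\prec y,z)=-\omega(x,z\circ y)$, $\omega(x\succ y,z)=\omega(x\circ z+z\circ x,y)$. $\omega^\sharp:A\to A^*$ is $\langle\omega^\sharp(x),y\rangle=\omega(x,y)$. For $r\in A\otimes A$, $T_r:A^*\to A$ is $\langle T_r(\zeta),\eta\rangle=\langle r,\zeta\otimes\eta\rangle$; $\tau$ is the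 flip. With $L_\ast(x)y=x\ast y$, $R_\ast(x)y=y\ast x$, $x\odot y=x\succ y+y\prec x$, $L_{\star}=L_{\circ}+R_{\circ}$, $L_{\odot}=L_{\succ}+R_{\prec}$: $r$ is invariant if $(I\otimes L_{\star}(x)-L_{\succ}(x)\otimes I)r=0$ and $(L_{\circ}(x)\otimes I-I\otimes L_{\odot}(x))r=0$ for all $x$. For $s=\sum_i a_i\otimes b_i$ the anti-pre-Novikov Yang–Baxter equation is $\sum_{i,j}a_i\circ a_j\otimes b_i\otimes b_j+\sum_{i,j}a_j\otimes a_i\otimes(b_i\odot b_j)+\sum_{i,j}a_i\otimes(b_i\prec a_j)\otimes b_j=0$. *)

theory Defs
  imports Main
begin

text \<open>A finite-dimensional vector space over the field 'k is modelled as
  the coordinate space 'n \<Rightarrow> 'k with 'n a finite index type (a fixed basis).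
  A tensor in A \<otimes> A is given by its coefficient function 'n \<Rightarrow> 'n \<Rightarrow> 'k
  w.r.t. the basis e_i \<otimes> e_j; a tensor in A \<otimes> A \<otimes> A by 'n \<Rightarrow> 'n \<Rightarrow> 'n \<Rightarrow> 'k.\<close>

type_synonym ('k, 'n) vec = "'n \<Rightarrow> 'k"
type_synonym ('k, 'n) binop = "('k, 'n) vec \<Rightarrow> ('k, 'n) vec \<Rightarrow> ('k, 'n) vec"

definition vadd :: "('k::field, 'n) vec \<Rightarrow> ('k, 'n) vec \<Rightarrow> ('k, 'n) vec" where
  "vadd x y = (\<lambda>i. x i + y i)"

definition vsub :: "('k::field, 'n) vec \<Rightarrow> ('k, 'n) vec \<Rightarrow> ('k, 'n) vec" where
  "vsub x y = (\<lambda>i. x i - y i)"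

definition vsmult :: "'k::field \<Rightarrow> ('k, 'n) vec \<Rightarrow> ('k, 'n) vec" where
  "vsmult c x = (\<lambda>i. c * x i)"

definition vzero :: "('k::field, 'n) vec" where
  "vzero = (\<lambda>i. 0)"

definition bvec :: "'n \<Rightarrow> ('k::field, 'n) vec" where
  "bvec i = (\<lambda>j. if j = i then 1 else 0)"

definition bilinear_op :: "('k::field, 'n) binop \<Rightarrow> bool" where
  "bilinear_op f \<longleftrightarrow>
     (\<forall>x y z. f (vadd x y) z = vadd (f x z) (f y z)) \<and>
     (\<forall>x y z. f x (vadd y z) = vadd (f x y) (f x z)) \<and>
     (\<forall>c x y. f (vsmult c x) y = vsmult c (f x y)) \<and>
     (\<forall>c x y. f x (vsmult c y) = vsmult c (f x y))"

definition bilinear_form :: "(('k::field, 'n) vec \<Rightarrow> ('k, 'n) vec \<Rightarrow> 'k) \<Rightarrow> bool" where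
  "bilinear_form w \<longleftrightarrow>
     (\<forall>x y z. w (vadd x y) z = w x z + w y z) \<and>
     (\<forall>x y z. w x (vadd y z) = w x y + w x z) \<and>
     (\<forall>c x y. w (vsmult c x) y = c * w x y) \<and>
     (\<forall>c x y. w x (vsmult c y) = c * w x y)"

definition circ_op :: "('k::field, 'n) binop \<Rightarrow> ('k, 'n) binop \<Rightarrow> ('k, 'n) binop" where
  "circ_op sc pr x y = vadd (sc x y) (pr x y)"

definition odot_op :: "('k::field, 'n) binop \<Rightarrow> ('k, 'n) binop \<Rightarrow> ('k, 'n) binop" where
  "odot_op sc pr x y = vadd (sc x y) (pr y x)"

definition anti_pre_Novikov :: "('k::field, 'n) binop \<Rightarrow> ('k, 'n) binop \<Rightarrow> bool" where
  "anti_pre_Novikov sc pr \<longleftrightarrow> bilinear_op sc \<and> bilinear_op pr \<and>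
     (\<forall>x y z. sc (vsub (circ_op sc pr x y) (circ_op sc pr y x)) z
                = vsub (sc y (sc x z)) (sc x (sc y z))) \<and>
     (\<forall>x y z. pr x (circ_op sc pr y z)
                = vsub (vsub (pr (sc y x) z) (pr (pr x y) z)) (sc y (pr x z))) \<and>
     (\<forall>x y z. sc (circ_op sc pr x y) z = vsmult (-1) (pr (sc x z) y)) \<and>
     (\<forall>x y z. pr (pr x y) z = pr (pr x z) y) \<and>
     (\<forall>x y z. pr (vsub (circ_op sc pr x y) (circ_op sc pr y x)) z
                = vsub (sc x (circ_op sc pr y z)) (sc y (circ_op sc pr x z)))"

definition quadratic_apN ::
  "('k::field, 'n) binop \<Rightarrow> ('k, 'n) binop \<Rightarrow> (('k, 'n) vec \<Rightarrow> ('k, 'n) vec \<Rightarrow> 'k) \<Rightarrow> bool" where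
  "quadratic_apN sc pr w \<longleftrightarrow> anti_pre_Novikov sc pr \<and> bilinear_form w \<and>
     (\<forall>x y. w x y = w y x) \<and>
     (\<forall>x. (\<forall>y. w x y = 0) \<longrightarrow> x = vzero) \<and>
     (\<forall>x y z. w (pr x y) z = - w x (circ_op sc pr z y)) \<and>
     (\<forall>x y z. w (sc x y) z = w (vadd (circ_op sc pr x z) (circ_op sc pr z x)) y)"

definition omega_sharp :: "(('k::field, 'n) vec \<Rightarrow> ('k, 'n) vec \<Rightarrow> 'k) \<Rightarrow> ('k, 'n) vec \<Rightarrow> (('k, 'n) vec \<Rightarrow> 'k)" where
  "omega_sharp w x = (\<lambda>y. w x y)"

text \<open>T_r : A^* \<rightarrow> A with \<langle>T_r \<zeta>, \<eta>\<rangle> = \<langle>r, \<zeta> \<otimes> \<eta>\<rangle>, for r = \<Sum> r_ij e_i \<otimes> e_j,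
  i.e. T_r \<zeta> = \<Sum>_ij r_ij \<zeta>(e_i) e_j.\<close>
definition T_map :: "('n::finite \<Rightarrow> 'n \<Rightarrow> 'k::field) \<Rightarrow> (('k, 'n) vec \<Rightarrow> 'k) \<Rightarrow> ('k, 'n) vec" where
  "T_map r \<zeta> = (\<lambda>j. \<Sum>i\<in>UNIV. r i j * \<zeta> (bvec i))"

definition flip :: "('n \<Rightarrow> 'n \<Rightarrow> 'k) \<Rightarrow> ('n \<Rightarrow> 'n \<Rightarrow> 'k)" where
  "flip r = (\<lambda>i j. r j i)"

definition tadd :: "('n \<Rightarrow> 'n \<Rightarrow> 'k::field) \<Rightarrow> ('n \<Rightarrow> 'n \<Rightarrow> 'k) \<Rightarrow> ('n \<Rightarrow> 'n \<Rightarrow> 'k)" where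
  "tadd r t = (\<lambda>i j. r i j + t i j)"

text \<open>(f \<otimes> g) r for linear maps f, g and r = \<Sum> r_ij e_i \<otimes> e_j.\<close>
definition tmap2 ::
  "(('k::field, 'n::finite) vec \<Rightarrow> ('k, 'n) vec) \<Rightarrow> (('k, 'n) vec \<Rightarrow> ('k, 'n) vec)
     \<Rightarrow> ('n \<Rightarrow> 'n \<Rightarrow> 'k) \<Rightarrow> ('n \<Rightarrow> 'n \<Rightarrow> 'k)" where
  "tmap2 f g r = (\<lambda>p q. \<Sum>i\<in>UNIV. \<Sum>j\<in>UNIV. r i j * f (bvec i) p * g (bvec j) q)"

text \<open>Invariance: (I \<otimes> L_\<star>(x) - L_\<succ>(x) \<otimes> I) r = 0 and (L_\<circ>(x) \<otimes> I - I \<otimes> L_\<odot>(x)) r = 0,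
  where L_\<star>(x) y = x \<circ> y + y \<circ> x and L_\<odot>(x) y = x \<succ> y + y \<prec> x.\<close>
definition invariant_tensor ::
  "('k::field, 'n::finite) binop \<Rightarrow> ('k, 'n) binop \<Rightarrow> ('n \<Rightarrow> 'n \<Rightarrow> 'k) \<Rightarrow> bool" where
  "invariant_tensor sc pr r \<longleftrightarrow> (\<forall>x.
     tmap2 id (\<lambda>y. vadd (circ_op sc pr x y) (circ_op sc pr y x)) r = tmap2 (\<lambda>y. sc x y) id r \<and>
     tmap2 (\<lambda>y. circ_op sc pr x y) id r = tmap2 id (\<lambda>y. odot_op sc pr x y) r)"

text \<open>Anti-pre-Novikov Yang--Baxter equation for s = \<Sum>_(i,j) s_ij e_i \<otimes> e_j
  (decomposition a_(i,j) = s_ij e_i, b_(i,j) = e_j); the left-hand side as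
  coefficient function of A \<otimes> A \<otimes> A.\<close>
definition apN_YBE :: "('k::field, 'n::finite) binop \<Rightarrow> ('k, 'n) binop \<Rightarrow> ('n \<Rightarrow> 'n \<Rightarrow> 'k) \<Rightarrow> bool" where
  "apN_YBE sc pr s \<longleftrightarrow>
     (\<lambda>p q t. \<Sum>i\<in>UNIV. \<Sum>j\<in>UNIV. \<Sum>k\<in>UNIV. \<Sum>l\<in>UNIV. s i j * s k l *
        (circ_op sc pr (bvec i) (bvec k) p * bvec j q * bvec l t
         + bvec k p * bvec i q * odot_op sc pr (bvec j) (bvec l) t
         + bvec i p * pr (bvec j) (bvec k) q * bvec l t)) = (\<lambda>p q t. 0)"

end

theory Submission
  imports Defs "HOL-Library.Function_Algebras" "HOL.Vector_Spaces"
begin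


lemma vec_expand: "(a::'n::finite \<Rightarrow> 'k::field) = (\<lambda>j. \<Sum>i\<in>UNIV. a i * bvec i j)"
  by (auto simp: bvec_def if_distrib[of "(*) _"] cong: if_cong)

lemma vec_expand_pt: "(a::'n::finite \<Rightarrow> 'k::field) j = (\<Sum>i\<in>UNIV. a i * bvec i j)"
  by (metis vec_expand)

lemma lf_sum:
  fixes \<phi> :: "('n \<Rightarrow> 'k::field) \<Rightarrow> 'k"
  assumes add: "\<And>a b. \<phi> (vadd a b) = \<phi> a + \<phi> b"
    and sm: "\<And>c a. \<phi> (vsmult c a) = c * \<phi> a"
  shows "finite I \<Longrightarrow> \<phi> (\<lambda>j. \<Sum>i\<in>I. c i * v i j) = (\<Sum>i\<in>I. c i * \<phi> (v i))"
proof (induction I rule: finite_induct)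
  case empty
  have "\<phi> (\<lambda>j. 0) = \<phi> (vsmult 0 (\<lambda>j. 0))" by (simp add: vsmult_def)
  also have "\<dots> = 0" by (simp add: sm)
  finally show ?case by simp
next
  case (insert a F)
  have "(\<lambda>j. \<Sum>i\<in>insert a F. c i * v i j) = vadd (vsmult (c a) (v a)) (\<lambda>j. \<Sum>i\<in>F. c i * v i j)"
    using insert by (simp add: vadd_def vsmult_def)
  then show ?case using insert by (simp add: add sm)
qed

lemma lf_expand:
  fixes \<phi> :: "('n::finite \<Rightarrow> 'k::field) \<Rightarrow> 'k"
  assumes add: "\<And>a b. \<phi> (vadd a b) = \<phi> a + \<phi> b"
    and sm: "\<And>c a. \<phi> (vsmult c a) = c * \<phi> a"
  shows "\<phi> a = (\<Sum>i\<in>UNIV. a i * \<phi> (bvec i))"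
proof -
  have "\<phi> a = \<phi> (\<lambda>j. \<Sum>i\<in>UNIV. a i * bvec i j)" by (subst vec_expand) simp
  also have "\<dots> = (\<Sum>i\<in>UNIV. a i * \<phi> (bvec i))" by (rule lf_sum[OF add sm]) simp
  finally show ?thesis .
qed

lemma delta_sum1[simp]: "(\<Sum>q\<in>UNIV. bvec (j::'n::finite) q * f q) = (f j::'k::field)"
proof -
  have "(\<Sum>q\<in>UNIV. bvec j q * f q) = (\<Sum>q\<in>UNIV. if q = j then f q else 0)"
    by (rule sum.cong) (auto simp: bvec_def)
  then show ?thesis by simp
qed
lemma delta_sum2[simp]: "(\<Sum>q\<in>UNIV. f q * bvec (j::'n::finite) q) = (f j::'k::field)"
  using delta_sum1[of j f] by (simp add: mult.commute)

lemma fsum_apply: "finite A \<Longrightarrow> (sum f A) x = (\<Sum>a\<in>A. f a x)"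
  by (induction A rule: finite_induct) auto

lemma bvec_inj: "inj (bvec :: 'n \<Rightarrow> 'n \<Rightarrow> 'k::field)"
  by (rule injI) (metis bvec_def one_neq_zero)




definition lin :: "(('k::field, 'n) vec \<Rightarrow> ('k, 'n) vec) \<Rightarrow> bool" where
  "lin f \<longleftrightarrow> (\<forall>a b. f (vadd a b) = vadd (f a) (f b)) \<and> (\<forall>c a. f (vsmult c a) = vsmult c (f a))"
definition linf :: "(('k::field, 'n) vec \<Rightarrow> 'k) \<Rightarrow> bool" where
  "linf f \<longleftrightarrow> (\<forall>a b. f (vadd a b) = f a + f b) \<and> (\<forall>c a. f (vsmult c a) = c * f a)"

lemma linf_expand: "linf \<phi> \<Longrightarrow> \<phi> a = (\<Sum>i\<in>UNIV. (a::'n::finite \<Rightarrow> 'k::field) i * \<phi> (bvec i))"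
  unfolding linf_def by (rule lf_expand) auto

lemma linf_comp: "linf \<phi> \<Longrightarrow> lin f \<Longrightarrow> linf (\<lambda>y. \<phi> (f y))"
  unfolding linf_def lin_def by auto

lemma vsub_alt: "vsub a b = vadd a (vsmult (-1) b)"
  by (simp add: vsub_def vadd_def vsmult_def)

lemma linf_sub: "linf \<phi> \<Longrightarrow> \<phi> (vsub a b) = \<phi> a - \<phi> b"
  unfolding linf_def vsub_alt by simp

lemma lin_sub: "lin f \<Longrightarrow> f (vsub a b) = vsub (f a) (f b)"
  unfolding lin_def vsub_alt by (simp add: vsub_alt)

lemma bop_lin1: "bilinear_op f \<Longrightarrow> lin (f x)"
  unfolding bilinear_op_def lin_def by auto
lemma bop_lin2: "bilinear_op f \<Longrightarrow> lin (\<lambda>y. f y x)"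
  unfolding bilinear_op_def lin_def by auto

lemma bf_linf1: "bilinear_form w \<Longrightarrow> linf (w x)"
  unfolding bilinear_form_def linf_def by auto
lemma bf_linf2: "bilinear_form w \<Longrightarrow> linf (\<lambda>y. w y x)"
  unfolding bilinear_form_def linf_def by auto

lemma lin_vadd: "lin f \<Longrightarrow> lin g \<Longrightarrow> lin (\<lambda>y. vadd (f y) (g y))"
  unfolding lin_def by (auto simp: vadd_def vsmult_def fun_eq_iff algebra_simps)

lemma bop_circ: "bilinear_op sc \<Longrightarrow> bilinear_op pr \<Longrightarrow> bilinear_op (circ_op sc pr)"
  unfolding bilinear_op_def circ_op_def
  by (auto simp: vadd_def vsmult_def fun_eq_iff algebra_simps)

lemma bilin_expand:
  fixes B :: "('n::finite \<Rightarrow> 'k::field) \<Rightarrow> ('n \<Rightarrow> 'k) \<Rightarrow> 'k"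
  assumes "\<And>x. linf (B x)" "\<And>y. linf (\<lambda>x. B x y)"
  shows "B a b = (\<Sum>i\<in>UNIV. \<Sum>j\<in>UNIV. a i * b j * B (bvec i) (bvec j))"
proof -
  have "B a b = (\<Sum>i\<in>UNIV. a i * B (bvec i) b)" by (rule linf_expand[OF assms(2)])
  also have "\<dots> = (\<Sum>i\<in>UNIV. a i * (\<Sum>j\<in>UNIV. b j * B (bvec i) (bvec j)))"
    by (subst linf_expand[OF assms(1)]) simp
  finally show ?thesis by (simp add: sum_distrib_left mult_ac)
qed

lemma T_map_linf: "linf \<beta> \<Longrightarrow>
  (\<Sum>i\<in>UNIV. \<Sum>j\<in>UNIV. r i j * \<alpha> (bvec i) * \<beta> (bvec j)) = \<beta> (T_map r \<alpha>)"
proof -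
  assume l: "linf \<beta>"
  have "\<beta> (T_map r \<alpha>) = (\<Sum>j\<in>UNIV. (\<Sum>i\<in>UNIV. r i j * \<alpha> (bvec i)) * \<beta> (bvec j))"
    by (subst linf_expand[OF l]) (simp add: T_map_def)
  also have "\<dots> = (\<Sum>j\<in>UNIV. \<Sum>i\<in>UNIV. r i j * \<alpha> (bvec i) * \<beta> (bvec j))"
    by (simp add: sum_distrib_right)
  also have "\<dots> = (\<Sum>i\<in>UNIV. \<Sum>j\<in>UNIV. r i j * \<alpha> (bvec i) * \<beta> (bvec j))"
    by (rule sum.swap)
  finally show ?thesis by simp
qed

lemma T_map_linf2: "linf \<alpha> \<Longrightarrow>
  (\<Sum>i\<in>UNIV. \<Sum>j\<in>UNIV. r i j * \<alpha> (bvec i) * \<beta> (bvec j)) = \<alpha> (T_map (flip r) \<beta>)"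
proof -
  assume l: "linf \<alpha>"
  have "\<alpha> (T_map (flip r) \<beta>) = (\<Sum>i\<in>UNIV. (\<Sum>j\<in>UNIV. r i j * \<beta> (bvec j)) * \<alpha> (bvec i))"
    by (subst linf_expand[OF l]) (simp add: T_map_def flip_def)
  also have "\<dots> = (\<Sum>i\<in>UNIV. \<Sum>j\<in>UNIV. r i j * \<alpha> (bvec i) * \<beta> (bvec j))"
    by (simp add: sum_distrib_right sum_distrib_left mult_ac)
  finally show ?thesis by simp
qed

lemma contract2:
  assumes l1: "linf \<phi>" and l2: "linf \<psi>"
  shows "(\<Sum>p\<in>UNIV. \<Sum>q\<in>UNIV. tmap2 f g r p q * \<phi> (bvec p) * \<psi> (bvec q))
     = (\<Sum>i\<in>UNIV. \<Sum>j\<in>UNIV. r i j * \<phi> (f (bvec i)) * \<psi> (g (bvec (j::'n::finite))))"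
proof -
  have "(\<Sum>p\<in>UNIV. \<Sum>q\<in>UNIV. tmap2 f g r p q * \<phi> (bvec p) * \<psi> (bvec q))
     = (\<Sum>p\<in>UNIV. \<Sum>q\<in>UNIV. \<Sum>i\<in>UNIV. \<Sum>j\<in>UNIV. r i j * f (bvec i) p * g (bvec j) q * \<phi> (bvec p) * \<psi> (bvec q))"
    by (simp add: tmap2_def sum_distrib_right)
  also have "\<dots> = (\<Sum>p\<in>UNIV. \<Sum>i\<in>UNIV. \<Sum>q\<in>UNIV. \<Sum>j\<in>UNIV. r i j * f (bvec i) p * g (bvec j) q * \<phi> (bvec p) * \<psi> (bvec q))"
    by (rule sum.cong[OF refl], rule sum.swap)
  also have "\<dots> = (\<Sum>i\<in>UNIV. \<Sum>p\<in>UNIV. \<Sum>q\<in>UNIV. \<Sum>j\<in>UNIV. r i j * f (bvec i) p * g (bvec j) q * \<phi> (bvec p) * \<psi> (bvec q))"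
    by (rule sum.swap)
  also have "\<dots> = (\<Sum>i\<in>UNIV. \<Sum>p\<in>UNIV. \<Sum>j\<in>UNIV. \<Sum>q\<in>UNIV. r i j * f (bvec i) p * g (bvec j) q * \<phi> (bvec p) * \<psi> (bvec q))"
    by (rule sum.cong[OF refl], rule sum.cong[OF refl], rule sum.swap)
  also have "\<dots> = (\<Sum>i\<in>UNIV. \<Sum>j\<in>UNIV. \<Sum>p\<in>UNIV. \<Sum>q\<in>UNIV. r i j * f (bvec i) p * g (bvec j) q * \<phi> (bvec p) * \<psi> (bvec q))"
    by (rule sum.cong[OF refl], rule sum.swap)
  also have "\<dots> = (\<Sum>i\<in>UNIV. \<Sum>j\<in>UNIV. r i j * (\<Sum>p\<in>UNIV. f (bvec i) p * \<phi> (bvec p)) * (\<Sum>q\<in>UNIV. g (bvec j) q * \<psi> (bvec q)))"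
    by (simp add: sum_distrib_left sum_distrib_right mult_ac)
  also have "\<dots> = (\<Sum>i\<in>UNIV. \<Sum>j\<in>UNIV. r i j * \<phi> (f (bvec i)) * \<psi> (g (bvec j)))"
    by (simp add: linf_expand[OF l1, symmetric] linf_expand[OF l2, symmetric])
  finally show ?thesis .
qed




lemma dual_exists:
  fixes w :: "('n::finite \<Rightarrow> 'k::field) \<Rightarrow> ('n \<Rightarrow> 'k) \<Rightarrow> 'k"
  assumes bf: "bilinear_form w" and nd: "\<forall>x. (\<forall>y. w x y = 0) \<longrightarrow> x = vzero"
  shows "\<exists>d. \<forall>q. w d (bvec q) = (if q = p then 1 else 0)"
proof -
  interpret v: vector_space "vsmult :: 'k \<Rightarrow> ('n \<Rightarrow> 'k) \<Rightarrow> _"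
    by unfold_locales (auto simp: vsmult_def algebra_simps)
  have ind: "v.independent (range (bvec :: 'n \<Rightarrow> 'n \<Rightarrow> 'k))"
  proof (rule v.independent_if_scalars_zero)
    show "finite (range (bvec :: 'n \<Rightarrow> 'n \<Rightarrow> 'k))" by simp
    fix f :: "('n \<Rightarrow> 'k) \<Rightarrow> 'k" and x :: "'n \<Rightarrow> 'k"
    assume eq: "(\<Sum>x\<in>range bvec. vsmult (f x) x) = 0" and x: "x \<in> range bvec"
    then obtain i where xi: "x = bvec i" by auto
    have "0 = (\<Sum>x\<in>range bvec. vsmult (f x) x) i" using eq by simp
    also have "\<dots> = (\<Sum>x\<in>range bvec. f x * x i)" by (simp add: fsum_apply vsmult_def)
    also have "\<dots> = (\<Sum>j\<in>UNIV. f (bvec j) * bvec j i)"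
      by (subst sum.reindex[OF bvec_inj]) simp
    also have "\<dots> = f x" using xi by (simp add: bvec_def if_distrib cong: if_cong)
    finally show "f x = 0" by simp
  qed
  have sp: "v.span (range (bvec :: 'n \<Rightarrow> 'n \<Rightarrow> 'k)) = UNIV"
  proof -
    have "x \<in> v.span (range bvec)" for x :: "'n \<Rightarrow> 'k"
    proof -
      have "x = (\<Sum>i\<in>UNIV. vsmult (x i) (bvec i))"
        by (rule ext) (simp add: fsum_apply vsmult_def vec_expand_pt[symmetric])
      also have "\<dots> \<in> v.span (range bvec)"
        by (intro v.span_sum v.span_scale v.span_base) auto
      finally show ?thesis .
    qed
    then show ?thesis by auto
  qed
  interpret fvs: finite_dimensional_vector_space "vsmult :: 'k \<Rightarrow> ('n \<Rightarrow> 'k) \<Rightarrow> _" "range bvec"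
    by unfold_locales (use ind sp in auto)
  define G where "G x = (\<lambda>q. w x (bvec q))" for x
  have vadd_plus: "vadd a b = a + b" for a b :: "'n \<Rightarrow> 'k" by (simp add: vadd_def fun_eq_iff)
  have lG: "Vector_Spaces.linear vsmult vsmult G"
  proof -
    have "G (x + y) = G x + G y" for x y
      using bf unfolding G_def bilinear_form_def by (simp add: vadd_plus[symmetric] fun_eq_iff vadd_def)
    moreover have "G (vsmult c x) = vsmult c (G x)" for c x
      using bf unfolding G_def bilinear_form_def by (simp add: vsmult_def)
    ultimately show ?thesis
      by (simp add: Vector_Spaces.linear_iff v.vector_space_axioms)
  qed
  have iG: "inj G"
  proof (rule injI)
    fix x y assume "G x = G y"
    then have e: "\<And>q. w x (bvec q) = w y (bvec q)" unfolding G_def by metis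
    have "w (vsub x y) z = 0" for z
    proof -
      have l: "linf (w (vsub x y))" by (rule bf_linf1[OF bf])
      have "w (vsub x y) z = (\<Sum>i\<in>UNIV. z i * w (vsub x y) (bvec i))" by (rule linf_expand[OF l])
      also have "\<dots> = 0"
        using e linf_sub[OF bf_linf2[OF bf]] by simp
      finally show ?thesis .
    qed
    then have "vsub x y = vzero" using nd by blast
    then show "x = y" by (simp add: vsub_def vzero_def fun_eq_iff)
  qed
  have "surj G" by (rule fvs.linear_inj_imp_surj[OF lG iG])
  then obtain d where "G d = bvec p" by (metis surjD)
  then show ?thesis unfolding G_def bvec_def by (metis)
qed




locale qa =
  fixes sc pr :: "('k::field, 'n::finite) binop"
    and w :: "('k, 'n) vec \<Rightarrow> ('k, 'n) vec \<Rightarrow> 'k"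
    and s :: "'n \<Rightarrow> 'n \<Rightarrow> 'k"
  assumes quad: "quadratic_apN sc pr w"
    and inv: "invariant_tensor sc pr (tadd s (flip s))"
begin

abbreviation circ where "circ \<equiv> circ_op sc pr"

lemma apn: "anti_pre_Novikov sc pr" using quad unfolding quadratic_apN_def by blast
lemma bsc: "bilinear_op sc" using apn unfolding anti_pre_Novikov_def by blast
lemma bpr: "bilinear_op pr" using apn unfolding anti_pre_Novikov_def by blast
lemma bcirc: "bilinear_op circ" by (rule bop_circ[OF bsc bpr])
lemma bf: "bilinear_form w" using quad unfolding quadratic_apN_def by blast
lemma wsym: "w x y = w y x" using quad unfolding quadratic_apN_def by blast
lemma nd: "\<forall>x. (\<forall>y. w x y = 0) \<longrightarrow> x = vzero" using quad unfolding quadratic_apN_def by blast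
lemma q1: "w (pr x y) z = - w x (circ z y)" using quad unfolding quadratic_apN_def by blast
lemma q2: "w (sc x y) z = w (vadd (circ x z) (circ z x)) y" using quad unfolding quadratic_apN_def by blast

lemma w_add1: "w (vadd a b) c = w a c + w b c" using bf unfolding bilinear_form_def by blast
lemma w_add2: "w c (vadd a b) = w c a + w c b" using bf unfolding bilinear_form_def by blast
lemma w_sub1: "w (vsub a b) c = w a c - w b c" using linf_sub[OF bf_linf2[OF bf]] by blast
lemma w_sub2: "w c (vsub a b) = w c a - w c b" using linf_sub[OF bf_linf1[OF bf]] by blast
lemma circ_add1: "circ (vadd a b) c = vadd (circ a c) (circ b c)" using bcirc unfolding bilinear_op_def by blast
lemma circ_add2: "circ c (vadd a b) = vadd (circ c a) (circ c b)" using bcirc unfolding bilinear_op_def by blast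

lemmas wexp = w_add1 w_add2 w_sub1 w_sub2 circ_add1 circ_add2

lemma lin_circ1: "lin (circ x)" by (rule bop_lin1[OF bcirc])
lemma lin_circ2: "lin (\<lambda>y. circ y x)" by (rule bop_lin2[OF bcirc])
lemma lin_sc1: "lin (sc x)" by (rule bop_lin1[OF bsc])
lemma lin_pr1: "lin (pr x)" by (rule bop_lin1[OF bpr])
lemma lin_sc2: "lin (\<lambda>y. sc y x)" by (rule bop_lin2[OF bsc])
lemma lin_pr2: "lin (\<lambda>y. pr y x)" by (rule bop_lin2[OF bpr])
lemma lin_id: "lin id" unfolding lin_def by simp
lemma lin_odot: "lin (odot_op sc pr x)"
  unfolding odot_op_def by (rule lin_vadd[OF lin_sc1 lin_pr2])
lemma lin_star: "lin (\<lambda>y. vadd (circ x y) (circ y x))"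
  by (rule lin_vadd[OF lin_circ1 lin_circ2])
lemma linf_w: "linf (w u)" by (rule bf_linf1[OF bf])

lemma nondeg_eq: "(\<And>u. w a u = w b u) \<Longrightarrow> a = b"
proof -
  assume h: "\<And>u. w a u = w b u"
  have "vsub a b = vzero" using nd h by (simp add: w_sub1)
  then show "a = b" by (simp add: vsub_def vzero_def fun_eq_iff)
qed

definition Pm where "Pm x = T_map s (omega_sharp w x)"
definition Qm where "Qm x = T_map (flip s) (omega_sharp w x)"
definition Rm where "Rm x = T_map (tadd s (flip s)) (omega_sharp w x)"

lemma osh: "omega_sharp w x = w x" by (simp add: omega_sharp_def fun_eq_iff)

lemma R_PQ: "Rm y = vadd (Pm y) (Qm y)"
  by (simp add: Rm_def Pm_def Qm_def T_map_def tadd_def vadd_def sum.distrib algebra_simps fun_eq_iff)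

lemma R_add: "Rm (vadd a b) = vadd (Rm a) (Rm b)"
  unfolding Rm_def T_map_def osh w_add1 by (simp add: vadd_def sum.distrib algebra_simps fun_eq_iff)

lemma adj: "w (Pm a) b = w a (Qm b)"
proof -
  have "w b (Pm a) = (\<Sum>i\<in>UNIV. \<Sum>j\<in>UNIV. s i j * w a (bvec i) * w b (bvec j))"
    unfolding Pm_def osh by (rule T_map_linf[OF linf_w, symmetric])
  also have "\<dots> = w a (Qm b)"
    unfolding Qm_def osh by (rule T_map_linf2[OF linf_w])
  finally show ?thesis by (simp add: wsym[of b])
qed

lemma Rself: "w (Rm a) b = w a (Rm b)"
  by (simp add: R_PQ wexp adj) (simp add: wsym[of a] wsym[of "Qm a"] adj)

lemma flip_r: "flip (tadd s (flip s)) = tadd s (flip s)"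
  by (simp add: flip_def tadd_def fun_eq_iff add.commute)

lemma I1: "w v (vadd (circ x (Rm u)) (circ (Rm u) x)) = w u (sc x (Rm v))"
proof -
  let ?r = "tadd s (flip s)"
  have e: "tmap2 id (\<lambda>y. vadd (circ x y) (circ y x)) ?r = tmap2 (\<lambda>y. sc x y) id ?r"
    using inv unfolding invariant_tensor_def by blast
  have "w v (vadd (circ x (Rm u)) (circ (Rm u) x))
      = (\<Sum>i\<in>UNIV. \<Sum>j\<in>UNIV. ?r i j * w u (bvec i) * w v (vadd (circ x (bvec j)) (circ (bvec j) x)))"
    unfolding Rm_def osh
    by (rule T_map_linf[OF linf_comp[OF linf_w lin_star], symmetric])
  also have "\<dots> = (\<Sum>p\<in>UNIV. \<Sum>q\<in>UNIV. tmap2 id (\<lambda>y. vadd (circ x y) (circ y x)) ?r p q * w u (bvec p) * w v (bvec q))"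
    by (subst contract2[OF linf_w linf_w]) simp
  also have "\<dots> = (\<Sum>p\<in>UNIV. \<Sum>q\<in>UNIV. tmap2 (\<lambda>y. sc x y) id ?r p q * w u (bvec p) * w v (bvec q))"
    by (simp only: e)
  also have "\<dots> = (\<Sum>i\<in>UNIV. \<Sum>j\<in>UNIV. ?r i j * w u (sc x (bvec i)) * w v (bvec j))"
    by (subst contract2[OF linf_w linf_w]) simp
  also have "\<dots> = w u (sc x (T_map (flip ?r) (w v)))"
    by (rule T_map_linf2[OF linf_comp[OF linf_w lin_sc1]])
  also have "\<dots> = w u (sc x (Rm v))" by (simp add: flip_r Rm_def osh)
  finally show ?thesis .
qed

lemma I2: "w u (circ x (Rm v)) = w v (odot_op sc pr x (Rm u))"
proof -
  let ?r = "tadd s (flip s)"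
  have e: "tmap2 (\<lambda>y. circ x y) id ?r = tmap2 id (\<lambda>y. odot_op sc pr x y) ?r"
    using inv unfolding invariant_tensor_def by blast
  have "w u (circ x (Rm v)) = w u (circ x (T_map (flip ?r) (w v)))" by (simp add: flip_r Rm_def osh)
  also have "\<dots> = (\<Sum>i\<in>UNIV. \<Sum>j\<in>UNIV. ?r i j * w u (circ x (bvec i)) * w v (bvec j))"
    by (rule T_map_linf2[OF linf_comp[OF linf_w lin_circ1], symmetric])
  also have "\<dots> = (\<Sum>p\<in>UNIV. \<Sum>q\<in>UNIV. tmap2 (\<lambda>y. circ x y) id ?r p q * w u (bvec p) * w v (bvec q))"
    by (subst contract2[OF linf_w linf_w]) simp
  also have "\<dots> = (\<Sum>p\<in>UNIV. \<Sum>q\<in>UNIV. tmap2 id (\<lambda>y. odot_op sc pr x y) ?r p q * w u (bvec p) * w v (bvec q))"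
    by (simp only: e)
  also have "\<dots> = (\<Sum>i\<in>UNIV. \<Sum>j\<in>UNIV. ?r i j * w u (bvec i) * w v (odot_op sc pr x (bvec j)))"
    by (subst contract2[OF linf_w linf_w]) simp
  also have "\<dots> = w v (odot_op sc pr x (Rm u))"
    unfolding Rm_def osh
    by (rule T_map_linf[OF linf_comp[OF linf_w lin_odot]])
  finally show ?thesis .
qed

end



context qa begin

lemma F5: "circ x (Rm v) = Rm (circ x v)"
proof (rule nondeg_eq)
  fix u
  have "w (circ x (Rm v)) u = w u (circ x (Rm v))" by (rule wsym)
  also have "\<dots> = w v (odot_op sc pr x (Rm u))" by (rule I2)
  also have "\<dots> = w (sc x (Rm u)) v + w (pr (Rm u) x) v"
    by (simp add: odot_op_def w_add2 wsym[of v])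
  also have "\<dots> = w (circ x v) (Rm u) + w (circ v x) (Rm u) - w (Rm u) (circ v x)"
    by (simp add: q1 q2 w_add1)
  also have "\<dots> = w (circ x v) (Rm u)" by (simp add: wsym[of "Rm u"])
  also have "\<dots> = w (Rm (circ x v)) u" by (simp add: Rself wsym[of "circ x v"])
  finally show "w (circ x (Rm v)) u = w (Rm (circ x v)) u" .
qed

lemma F4: "vadd (circ x (Rm u)) (circ (Rm u) x) = Rm (vadd (circ x u) (circ u x))"
proof (rule nondeg_eq)
  fix v
  have "w (vadd (circ x (Rm u)) (circ (Rm u) x)) v = w v (vadd (circ x (Rm u)) (circ (Rm u) x))" by (rule wsym)
  also have "\<dots> = w u (sc x (Rm v))" by (rule I1)
  also have "\<dots> = w (vadd (circ x u) (circ u x)) (Rm v)" by (simp add: wsym[of u] q2)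
  also have "\<dots> = w (Rm (vadd (circ x u) (circ u x))) v" by (simp add: Rself)
  finally show "w (vadd (circ x (Rm u)) (circ (Rm u) x)) v = w (Rm (vadd (circ x u) (circ u x))) v" .
qed

lemma F6: "circ (Rm u) x = Rm (circ u x)"
proof -
  have "vadd (circ x (Rm u)) (circ (Rm u) x) = vadd (circ x (Rm u)) (Rm (circ u x))"
    using F4 by (simp add: R_add F5)
  then show ?thesis by (simp add: vadd_def fun_eq_iff)
qed

lemma comm_w: "w a (circ z (Pm y)) + w a (circ z (Qm y)) = w a (circ (Pm z) y) + w a (circ (Qm z) y)"
proof -
  have "circ z (Rm y) = circ (Rm z) y" by (simp add: F5 F6)
  then have "w a (circ z (Rm y)) = w a (circ (Rm z) y)" by simp
  then show ?thesis by (simp add: R_PQ wexp)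
qed

end



context qa begin

definition Cf where
  "Cf x y z = w x (circ (Qm y) (Qm z)) + w (Pm x) (circ (Pm y) z) - w (Pm x) (circ y (Qm z))"

lemma prec_scalar:
  "w (pr (Pm x) (Pm y)) z - w (Pm (vsub (vadd (pr (Pm x) y) (pr x (Pm y))) (pr x (Rm y)))) z = - Cf x z y"
proof -
  have h1: "w (Pm (vsub (vadd (pr (Pm x) y) (pr x (Pm y))) (pr x (Rm y)))) z
      = w (vsub (vadd (pr (Pm x) y) (pr x (Pm y))) (pr x (Rm y))) (Qm z)" by (rule adj)
  have c: "w (Pm x) (circ z (Pm y)) + w (Pm x) (circ z (Qm y)) = w (Pm x) (circ (Pm z) y) + w (Pm x) (circ (Qm z) y)"
    by (rule comm_w)
  show ?thesis
    unfolding h1 Cf_def using c by (simp add: wexp q1 R_PQ algebra_simps)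
qed

lemma succ_scalar:
  "w (sc (Pm x) (Pm y)) z - w (Pm (vsub (vadd (sc (Pm x) y) (sc x (Pm y))) (sc x (Rm y)))) z = Cf y x z + Cf y z x"
proof -
  have h1: "w (Pm (vsub (vadd (sc (Pm x) y) (sc x (Pm y))) (sc x (Rm y)))) z
      = w (vsub (vadd (sc (Pm x) y) (sc x (Pm y))) (sc x (Rm y))) (Qm z)" by (rule adj)
  have h2: "w (circ x (Qm z)) (Rm y) = w (circ (Pm x) (Qm z)) y + w (circ (Qm x) (Qm z)) y"
  proof -
    have "w (circ x (Qm z)) (Rm y) = w (Rm (circ x (Qm z))) y" by (simp add: Rself)
    also have "\<dots> = w (circ (Rm x) (Qm z)) y" by (simp add: F6)
    finally show ?thesis by (simp add: R_PQ wexp)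
  qed
  have h3: "w (circ (Qm z) x) (Rm y) = w (circ (Qm z) (Pm x)) y + w (circ (Qm z) (Qm x)) y"
  proof -
    have "w (circ (Qm z) x) (Rm y) = w (Rm (circ (Qm z) x)) y" by (simp add: Rself)
    also have "\<dots> = w (circ (Qm z) (Rm x)) y" by (simp add: F5)
    finally show ?thesis by (simp add: R_PQ wexp)
  qed
  have c: "w (Pm y) (circ z (Pm x)) + w (Pm y) (circ z (Qm x)) = w (Pm y) (circ (Pm z) x) + w (Pm y) (circ (Qm z) x)"
    by (rule comm_w)
  show ?thesis
    unfolding h1 Cf_def using c
    by (simp add: w_add1 w_sub1 q2 h2 h3 wsym[of "circ _ _" y] wsym[of "circ _ _" "Pm y"] algebra_simps)
qed

end



lemma if1_mult: "(if P then 1 else 0) * (a::'k::field) = (if P then a else 0)" by simp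
lemma mult_if1: "(a::'k::field) * (if P then 1 else 0) = (if P then a else 0)" by simp
lemma if_mult0: "(if P then a else 0) * (b::'k::field) = (if P then a * b else 0)" by simp
lemma mult_if0: "(b::'k::field) * (if P then a else 0) = (if P then b * a else 0)" by simp
lemma sum_if_const: "(\<Sum>q\<in>A. if P then f q else (0::'k::field)) = (if P then \<Sum>q\<in>A. f q else 0)" by simp
lemmas ifm = sum_if_const if1_mult mult_if1 if_mult0 mult_if0

lemma Zlem:
  fixes A B Cc a b c :: "'n::finite \<Rightarrow> 'k::field"
  shows "(\<Sum>p\<in>UNIV. \<Sum>q\<in>UNIV. \<Sum>t\<in>UNIV. (A p * bvec j q * bvec l t + bvec k p * bvec i q * B t + bvec i p * Cc q * bvec l t) * a p * b q * c t)
   = (\<Sum>p\<in>UNIV. A p * a p) * b j * c l + a k * b i * (\<Sum>t\<in>UNIV. B t * c t) + a i * (\<Sum>q\<in>UNIV. Cc q * b q) * c l"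
  apply (simp add: distrib_right sum.distrib bvec_def ifm)
  apply (simp add: sum_distrib_left sum_distrib_right mult_ac)
  done

lemma out3: "(\<Sum>p\<in>A. \<Sum>q\<in>B. \<Sum>t\<in>C. \<Sum>i\<in>D. g i p q t) = (\<Sum>i\<in>D. \<Sum>p\<in>A. \<Sum>q\<in>B. \<Sum>t\<in>C. g i p q t)"
proof -
  have "(\<Sum>p\<in>A. \<Sum>q\<in>B. \<Sum>t\<in>C. \<Sum>i\<in>D. g i p q t) = (\<Sum>p\<in>A. \<Sum>q\<in>B. \<Sum>i\<in>D. \<Sum>t\<in>C. g i p q t)"
    by (rule sum.cong[OF refl], rule sum.cong[OF refl], rule sum.swap)
  also have "\<dots> = (\<Sum>p\<in>A. \<Sum>i\<in>D. \<Sum>q\<in>B. \<Sum>t\<in>C. g i p q t)"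
    by (rule sum.cong[OF refl], rule sum.swap)
  also have "\<dots> = (\<Sum>i\<in>D. \<Sum>p\<in>A. \<Sum>q\<in>B. \<Sum>t\<in>C. g i p q t)"
    by (rule sum.swap)
  finally show ?thesis .
qed

lemma perm7: "(\<Sum>p\<in>A. \<Sum>q\<in>B. \<Sum>t\<in>C. \<Sum>i\<in>D. \<Sum>j\<in>E. \<Sum>k\<in>F. \<Sum>l\<in>G. f p q t i j k l)
  = (\<Sum>i\<in>D. \<Sum>j\<in>E. \<Sum>k\<in>F. \<Sum>l\<in>G. \<Sum>p\<in>A. \<Sum>q\<in>B. \<Sum>t\<in>C. f p q t i j k l)"
proof -
  have "(\<Sum>p\<in>A. \<Sum>q\<in>B. \<Sum>t\<in>C. \<Sum>i\<in>D. \<Sum>j\<in>E. \<Sum>k\<in>F. \<Sum>l\<in>G. f p q t i j k l)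
      = (\<Sum>i\<in>D. \<Sum>p\<in>A. \<Sum>q\<in>B. \<Sum>t\<in>C. \<Sum>j\<in>E. \<Sum>k\<in>F. \<Sum>l\<in>G. f p q t i j k l)"
    by (rule out3)
  also have "\<dots> = (\<Sum>i\<in>D. \<Sum>j\<in>E. \<Sum>p\<in>A. \<Sum>q\<in>B. \<Sum>t\<in>C. \<Sum>k\<in>F. \<Sum>l\<in>G. f p q t i j k l)"
    by (rule sum.cong[OF refl], rule out3)
  also have "\<dots> = (\<Sum>i\<in>D. \<Sum>j\<in>E. \<Sum>k\<in>F. \<Sum>p\<in>A. \<Sum>q\<in>B. \<Sum>t\<in>C. \<Sum>l\<in>G. f p q t i j k l)"
    by (rule sum.cong[OF refl], rule sum.cong[OF refl], rule out3)
  also have "\<dots> = (\<Sum>i\<in>D. \<Sum>j\<in>E. \<Sum>k\<in>F. \<Sum>l\<in>G. \<Sum>p\<in>A. \<Sum>q\<in>B. \<Sum>t\<in>C. f p q t i j k l)"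
    by (rule sum.cong[OF refl], rule sum.cong[OF refl], rule sum.cong[OF refl], rule out3)
  finally show ?thesis .
qed

lemma pull4:
  fixes K :: "'n \<Rightarrow> 'n \<Rightarrow> 'n \<Rightarrow> 'n \<Rightarrow> 'k::field"
  shows "(\<Sum>p\<in>A. \<Sum>q\<in>B. \<Sum>t\<in>C. (\<Sum>i\<in>D. \<Sum>j\<in>D. \<Sum>k\<in>D. \<Sum>l\<in>D. K i j k l * X i j k l p q t) * a p * b q * c t)
   = (\<Sum>i\<in>D. \<Sum>j\<in>D. \<Sum>k\<in>D. \<Sum>l\<in>D. K i j k l * (\<Sum>p\<in>A. \<Sum>q\<in>B. \<Sum>t\<in>C. X i j k l p q t * a p * b q * c t))"
proof -
  have "(\<Sum>p\<in>A. \<Sum>q\<in>B. \<Sum>t\<in>C. (\<Sum>i\<in>D. \<Sum>j\<in>D. \<Sum>k\<in>D. \<Sum>l\<in>D. K i j k l * X i j k l p q t) * a p * b q * c t)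
     = (\<Sum>p\<in>A. \<Sum>q\<in>B. \<Sum>t\<in>C. \<Sum>i\<in>D. \<Sum>j\<in>D. \<Sum>k\<in>D. \<Sum>l\<in>D. K i j k l * X i j k l p q t * a p * b q * c t)"
    by (simp add: sum_distrib_right)
  also have "\<dots> = (\<Sum>i\<in>D. \<Sum>j\<in>D. \<Sum>k\<in>D. \<Sum>l\<in>D. \<Sum>p\<in>A. \<Sum>q\<in>B. \<Sum>t\<in>C. K i j k l * X i j k l p q t * a p * b q * c t)"
    by (rule perm7)
  also have "\<dots> = (\<Sum>i\<in>D. \<Sum>j\<in>D. \<Sum>k\<in>D. \<Sum>l\<in>D. K i j k l * (\<Sum>p\<in>A. \<Sum>q\<in>B. \<Sum>t\<in>C. X i j k l p q t * a p * b q * c t))"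
    by (simp add: sum_distrib_left mult.assoc)
  finally show ?thesis .
qed

lemma mid4: "(\<Sum>a\<in>A. \<Sum>b\<in>B. \<Sum>c\<in>C. \<Sum>d\<in>D. f a b c d) = (\<Sum>a\<in>A. \<Sum>c\<in>C. \<Sum>b\<in>B. \<Sum>d\<in>D. f a b c d)"
  by (rule sum.cong[OF refl], rule sum.swap)

lemma pair4: "(\<Sum>a\<in>A. \<Sum>b\<in>B. \<Sum>c\<in>C. \<Sum>d\<in>D. f a b c d) = (\<Sum>c\<in>C. \<Sum>d\<in>D. \<Sum>a\<in>A. \<Sum>b\<in>B. f a b c d)"
proof -
  have "(\<Sum>a\<in>A. \<Sum>b\<in>B. \<Sum>c\<in>C. \<Sum>d\<in>D. f a b c d) = (\<Sum>a\<in>A. \<Sum>c\<in>C. \<Sum>b\<in>B. \<Sum>d\<in>D. f a b c d)"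
    by (rule mid4)
  also have "\<dots> = (\<Sum>a\<in>A. \<Sum>c\<in>C. \<Sum>d\<in>D. \<Sum>b\<in>B. f a b c d)"
    by (rule sum.cong[OF refl], rule sum.cong[OF refl], rule sum.swap)
  also have "\<dots> = (\<Sum>c\<in>C. \<Sum>a\<in>A. \<Sum>d\<in>D. \<Sum>b\<in>B. f a b c d)"
    by (rule sum.swap)
  also have "\<dots> = (\<Sum>c\<in>C. \<Sum>d\<in>D. \<Sum>a\<in>A. \<Sum>b\<in>B. f a b c d)"
    by (rule sum.cong[OF refl], rule sum.swap)
  finally show ?thesis .
qed




context qa begin

lemma wsum: "(\<Sum>p\<in>UNIV. v p * w u (bvec p)) = w u v"
  by (rule linf_expand[OF linf_w, symmetric])

lemma Qm_app: "Qm y i = (\<Sum>j\<in>UNIV. s i j * w y (bvec j))"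
  by (simp add: Qm_def T_map_def flip_def osh)
lemma Pm_app: "Pm y j = (\<Sum>i\<in>UNIV. s i j * w y (bvec i))"
  by (simp add: Pm_def T_map_def osh)

lemma YC: "(\<Sum>p\<in>UNIV. \<Sum>q\<in>UNIV. \<Sum>t\<in>UNIV.
     (\<Sum>i\<in>UNIV. \<Sum>j\<in>UNIV. \<Sum>k\<in>UNIV. \<Sum>l\<in>UNIV. s i j * s k l *
        (circ_op sc pr (bvec i) (bvec k) p * bvec j q * bvec l t
         + bvec k p * bvec i q * odot_op sc pr (bvec j) (bvec l) t
         + bvec i p * pr (bvec j) (bvec k) q * bvec l t)) * w x (bvec p) * w y (bvec q) * w z (bvec t))
  = (\<Sum>i\<in>UNIV. \<Sum>j\<in>UNIV. \<Sum>k\<in>UNIV. \<Sum>l\<in>UNIV. s i j * s k l *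
        (w x (circ (bvec i) (bvec k)) * w y (bvec j) * w z (bvec l)
        + w x (bvec k) * w y (bvec i) * w z (odot_op sc pr (bvec j) (bvec l))
        + w x (bvec i) * w y (pr (bvec j) (bvec k)) * w z (bvec l)))"
  by (subst pull4, simp only: Zlem, simp only: wsum)

lemma T1: "w x (circ (Qm y) (Qm z)) = (\<Sum>i\<in>UNIV. \<Sum>j\<in>UNIV. \<Sum>k\<in>UNIV. \<Sum>l\<in>UNIV. s i j * s k l *
        (w x (circ (bvec i) (bvec k)) * w y (bvec j) * w z (bvec l)))"
proof -
  have "w x (circ (Qm y) (Qm z)) = (\<Sum>i\<in>UNIV. \<Sum>k\<in>UNIV. Qm y i * Qm z k * w x (circ (bvec i) (bvec k)))"
    by (rule bilin_expand[OF linf_comp[OF linf_w lin_circ1] linf_comp[OF linf_w lin_circ2]])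
  also have "\<dots> = (\<Sum>i\<in>UNIV. \<Sum>k\<in>UNIV. \<Sum>l\<in>UNIV. \<Sum>j\<in>UNIV. s i j * s k l *
        (w x (circ (bvec i) (bvec k)) * w y (bvec j) * w z (bvec l)))"
    by (simp add: Qm_app sum_distrib_left sum_distrib_right mult_ac)
  also have "\<dots> = (\<Sum>i\<in>UNIV. \<Sum>k\<in>UNIV. \<Sum>j\<in>UNIV. \<Sum>l\<in>UNIV. s i j * s k l *
        (w x (circ (bvec i) (bvec k)) * w y (bvec j) * w z (bvec l)))"
    by (rule sum.cong[OF refl], rule sum.cong[OF refl], rule sum.swap)
  also have "\<dots> = (\<Sum>i\<in>UNIV. \<Sum>j\<in>UNIV. \<Sum>k\<in>UNIV. \<Sum>l\<in>UNIV. s i j * s k l *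
        (w x (circ (bvec i) (bvec k)) * w y (bvec j) * w z (bvec l)))"
    by (rule mid4)
  finally show ?thesis .
qed

lemma T2: "w z (odot_op sc pr (Pm y) (Pm x)) = (\<Sum>i\<in>UNIV. \<Sum>j\<in>UNIV. \<Sum>k\<in>UNIV. \<Sum>l\<in>UNIV. s i j * s k l *
        (w x (bvec k) * w y (bvec i) * w z (odot_op sc pr (bvec j) (bvec l))))"
proof -
  have "w z (odot_op sc pr (Pm y) (Pm x)) = (\<Sum>j\<in>UNIV. \<Sum>l\<in>UNIV. Pm y j * Pm x l * w z (odot_op sc pr (bvec j) (bvec l)))"
    by (rule bilin_expand[OF linf_comp[OF linf_w lin_odot]]) 
       (rule linf_comp[OF linf_w], unfold odot_op_def, rule lin_vadd[OF lin_sc2 lin_pr1])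
  also have "\<dots> = (\<Sum>j\<in>UNIV. \<Sum>l\<in>UNIV. \<Sum>k\<in>UNIV. \<Sum>i\<in>UNIV. s i j * s k l *
        (w x (bvec k) * w y (bvec i) * w z (odot_op sc pr (bvec j) (bvec l))))"
    by (simp add: Pm_app sum_distrib_left sum_distrib_right mult_ac)
  also have "\<dots> = (\<Sum>j\<in>UNIV. \<Sum>l\<in>UNIV. \<Sum>i\<in>UNIV. \<Sum>k\<in>UNIV. s i j * s k l *
        (w x (bvec k) * w y (bvec i) * w z (odot_op sc pr (bvec j) (bvec l))))"
    by (rule sum.cong[OF refl], rule sum.cong[OF refl], rule sum.swap)
  also have "\<dots> = (\<Sum>i\<in>UNIV. \<Sum>k\<in>UNIV. \<Sum>j\<in>UNIV. \<Sum>l\<in>UNIV. s i j * s k l *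
        (w x (bvec k) * w y (bvec i) * w z (odot_op sc pr (bvec j) (bvec l))))"
    by (rule pair4)
  also have "\<dots> = (\<Sum>i\<in>UNIV. \<Sum>j\<in>UNIV. \<Sum>k\<in>UNIV. \<Sum>l\<in>UNIV. s i j * s k l *
        (w x (bvec k) * w y (bvec i) * w z (odot_op sc pr (bvec j) (bvec l))))"
    by (rule mid4)
  finally show ?thesis .
qed

lemma T3: "w y (pr (Pm x) (Qm z)) = (\<Sum>i\<in>UNIV. \<Sum>j\<in>UNIV. \<Sum>k\<in>UNIV. \<Sum>l\<in>UNIV. s i j * s k l *
        (w x (bvec i) * w y (pr (bvec j) (bvec k)) * w z (bvec l)))"
proof -
  have "w y (pr (Pm x) (Qm z)) = (\<Sum>j\<in>UNIV. \<Sum>k\<in>UNIV. Pm x j * Qm z k * w y (pr (bvec j) (bvec k)))"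
    by (rule bilin_expand[OF linf_comp[OF linf_w lin_pr1] linf_comp[OF linf_w lin_pr2]])
  also have "\<dots> = (\<Sum>j\<in>UNIV. \<Sum>k\<in>UNIV. \<Sum>l\<in>UNIV. \<Sum>i\<in>UNIV. s i j * s k l *
        (w x (bvec i) * w y (pr (bvec j) (bvec k)) * w z (bvec l)))"
    by (simp add: Pm_app Qm_app sum_distrib_left sum_distrib_right mult_ac)
  also have "\<dots> = (\<Sum>j\<in>UNIV. \<Sum>k\<in>UNIV. \<Sum>i\<in>UNIV. \<Sum>l\<in>UNIV. s i j * s k l *
        (w x (bvec i) * w y (pr (bvec j) (bvec k)) * w z (bvec l)))"
    by (rule sum.cong[OF refl], rule sum.cong[OF refl], rule sum.swap)
  also have "\<dots> = (\<Sum>j\<in>UNIV. \<Sum>i\<in>UNIV. \<Sum>k\<in>UNIV. \<Sum>l\<in>UNIV. s i j * s k l *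
        (w x (bvec i) * w y (pr (bvec j) (bvec k)) * w z (bvec l)))"
    by (rule mid4)
  also have "\<dots> = (\<Sum>i\<in>UNIV. \<Sum>j\<in>UNIV. \<Sum>k\<in>UNIV. \<Sum>l\<in>UNIV. s i j * s k l *
        (w x (bvec i) * w y (pr (bvec j) (bvec k)) * w z (bvec l)))"
    by (rule sum.swap)
  finally show ?thesis .
qed

end



context qa begin

lemma RAW_C: "w x (circ (Qm y) (Qm z)) + w z (odot_op sc pr (Pm y) (Pm x)) + w y (pr (Pm x) (Qm z)) = Cf x y z"
proof -
  have a: "w z (odot_op sc pr (Pm y) (Pm x)) = w (Pm x) (circ (Pm y) z)"
    by (simp add: odot_op_def w_add2 wsym[of z] q1 q2 w_add1 wsym[of "circ _ _" "Pm x"])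
  have b: "w y (pr (Pm x) (Qm z)) = - w (Pm x) (circ y (Qm z))"
    by (simp add: wsym[of y] q1)
  show ?thesis unfolding Cf_def a b by simp
qed

definition Yf where
  "Yf = (\<lambda>p q t. \<Sum>i\<in>UNIV. \<Sum>j\<in>UNIV. \<Sum>k\<in>UNIV. \<Sum>l\<in>UNIV. s i j * s k l *
        (circ_op sc pr (bvec i) (bvec k) p * bvec j q * bvec l t
         + bvec k p * bvec i q * odot_op sc pr (bvec j) (bvec l) t
         + bvec i p * pr (bvec j) (bvec k) q * bvec l t))"

lemma contr_C: "(\<Sum>p\<in>UNIV. \<Sum>q\<in>UNIV. \<Sum>t\<in>UNIV. Yf p q t * w x (bvec p) * w y (bvec q) * w z (bvec t)) = Cf x y z"
  unfolding Yf_def YC RAW_C[symmetric] T1 T2 T3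
  by (simp add: distrib_left sum.distrib)

lemma YBE_iff_C: "apN_YBE sc pr s \<longleftrightarrow> (\<forall>x y z. Cf x y z = 0)"
proof
  assume "apN_YBE sc pr s"
  then have Y0: "Yf = (\<lambda>p q t. 0)" unfolding apN_YBE_def Yf_def .
  show "\<forall>x y z. Cf x y z = 0"
  proof (intro allI)
    fix x y z
    show "Cf x y z = 0" using contr_C[of x y z] by (simp add: Y0)
  qed
next
  assume C0: "\<forall>x y z. Cf x y z = 0"
  have "Yf p q t = 0" for p q t
  proof -
    obtain dp where dp: "\<forall>r. w dp (bvec r) = (if r = p then 1 else 0)"
      using dual_exists[OF bf nd] by blast
    obtain dq where dq: "\<forall>r. w dq (bvec r) = (if r = q then 1 else 0)"
      using dual_exists[OF bf nd] by blast
    obtain dt where dt: "\<forall>r. w dt (bvec r) = (if r = t then 1 else 0)"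
      using dual_exists[OF bf nd] by blast
    have "Yf p q t = (\<Sum>p'\<in>UNIV. \<Sum>q'\<in>UNIV. \<Sum>t'\<in>UNIV. Yf p' q' t' * w dp (bvec p') * w dq (bvec q') * w dt (bvec t'))"
      by (simp add: dp dq dt ifm)
    also have "\<dots> = Cf dp dq dt" by (rule contr_C)
    also have "\<dots> = 0" using C0 by blast
    finally show ?thesis .
  qed
  then have "Yf = (\<lambda>p q t. 0)" by (simp add: fun_eq_iff)
  then show "apN_YBE sc pr s" unfolding apN_YBE_def Yf_def .
qed

theorem main_loc:
  "apN_YBE sc pr s \<longleftrightarrow>
    (\<forall>x y.
       sc (Pm x) (Pm y) = Pm (vsub (vadd (sc (Pm x) y) (sc x (Pm y))) (sc x (Rm y))) \<and>
       pr (Pm x) (Pm y) = Pm (vsub (vadd (pr (Pm x) y) (pr x (Pm y))) (pr x (Rm y))))"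
proof
  assume "apN_YBE sc pr s"
  then have C0: "\<forall>x y z. Cf x y z = 0" using YBE_iff_C by blast
  show "\<forall>x y. sc (Pm x) (Pm y) = Pm (vsub (vadd (sc (Pm x) y) (sc x (Pm y))) (sc x (Rm y))) \<and>
       pr (Pm x) (Pm y) = Pm (vsub (vadd (pr (Pm x) y) (pr x (Pm y))) (pr x (Rm y)))"
  proof (intro allI conjI)
    fix x y
    show "sc (Pm x) (Pm y) = Pm (vsub (vadd (sc (Pm x) y) (sc x (Pm y))) (sc x (Rm y)))"
    proof (rule nondeg_eq)
      fix z
      show "w (sc (Pm x) (Pm y)) z = w (Pm (vsub (vadd (sc (Pm x) y) (sc x (Pm y))) (sc x (Rm y)))) z"
        using succ_scalar[of x y z] C0 by simp
    qed
    show "pr (Pm x) (Pm y) = Pm (vsub (vadd (pr (Pm x) y) (pr x (Pm y))) (pr x (Rm y)))"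
    proof (rule nondeg_eq)
      fix z
      show "w (pr (Pm x) (Pm y)) z = w (Pm (vsub (vadd (pr (Pm x) y) (pr x (Pm y))) (pr x (Rm y)))) z"
        using prec_scalar[of x y z] C0 by simp
    qed
  qed
next
  assume H: "\<forall>x y.
       sc (Pm x) (Pm y) = Pm (vsub (vadd (sc (Pm x) y) (sc x (Pm y))) (sc x (Rm y))) \<and>
       pr (Pm x) (Pm y) = Pm (vsub (vadd (pr (Pm x) y) (pr x (Pm y))) (pr x (Rm y)))"
  have "Cf x y z = 0" for x y z
    using prec_scalar[of x z y] H by simp
  then show "apN_YBE sc pr s" using YBE_iff_C by blast
qed

end



theorem mainTheorem15:
  fixes sc pr :: "('k::field, 'n::finite) binop"
    and w :: "('k, 'n) vec \<Rightarrow> ('k, 'n) vec \<Rightarrow> 'k"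
    and s :: "'n \<Rightarrow> 'n \<Rightarrow> 'k"
    and P :: "('k, 'n) vec \<Rightarrow> ('k, 'n) vec"
  assumes quad: "quadratic_apN sc pr w"
    and inv: "invariant_tensor sc pr (tadd s (flip s))"
    and P_def: "\<And>x. P x = T_map s (omega_sharp w x)"
  shows "apN_YBE sc pr s \<longleftrightarrow>
    (\<forall>x y.
       sc (P x) (P y) = P (vsub (vadd (sc (P x) y) (sc x (P y)))
                                (sc x (T_map (tadd s (flip s)) (omega_sharp w y)))) \<and>
       pr (P x) (P y) = P (vsub (vadd (pr (P x) y) (pr x (P y)))
                                (pr x (T_map (tadd s (flip s)) (omega_sharp w y)))))"
  proof -
  interpret qa sc pr w s using quad inv by unfold_locales
  have PP: "P = Pm" by (rule ext) (simp add: P_def Pm_def)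
  show ?thesis unfolding PP by (rule main_loc[unfolded Rm_def])
qed

end
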